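(* Let $r\geqslant 3$ be an odd integer and let $\Gamma\cong\mathbb{Z}_{4r}\oplus\mathbb{Z}_4$. Then there exists an $\mathrm{MRS}_\Gamma(r,8;2)$ in which every row sum and every column sum equals $0_\Gamma$.
   Context: For an abelian group $\Gamma$ of order $abc$, an $\mathrm{MRS}_\Gamma(a,b;c)$ is a collection of $c$ arrays of size $a\times b$ whose entries are the elements of $\Gamma$, each appearing exactly once and in a unique array, such that there are $\omega,\delta\in\Gamma$ with every row sum (in every array) equal to $\omega$ and every column sum (in every array) equal to $\delta$. *)

theory Defs
  imports "HOL-Algebra.Algebra"
begin

text \<open>An abelian group is written multiplicatively in HOL-Algebra, so the group
  operation plays the role of the sum and the unit plays the role of 0.
  An MRS_G(a,b;c) is a family of c arrays of size a x b, encoded as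
  A k i j (array k < c, row i < a, column j < b), whose entries run bijectively
  over the elements of G, with all row sums equal to w and all column sums equal to d.\<close>

definition is_MRS ::
  "('g, 'm) monoid_scheme \<Rightarrow> nat \<Rightarrow> nat \<Rightarrow> nat \<Rightarrow> (nat \<Rightarrow> nat \<Rightarrow> nat \<Rightarrow> 'g) \<Rightarrow> 'g \<Rightarrow> 'g \<Rightarrow> bool"
where
  "is_MRS G a b c A w d \<longleftrightarrow>
     finite (carrier G) \<and> card (carrier G) = a * b * c \<and>
     bij_betw (\<lambda>(k, i, j). A k i j) ({..<c} \<times> {..<a} \<times> {..<b}) (carrier G) \<and>
     w \<in> carrier G \<and> d \<in> carrier G \<and>
     (\<forall>k<c. \<forall>i<a. finprod G (\<lambda>j. A k i j) {..<b} = w) \<and>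
     (\<forall>k<c. \<forall>j<b. finprod G (\<lambda>i. A k i j) {..<a} = d)"

end

theory Submission
  imports Defs
begin

abbreviation PG :: "nat \<Rightarrow> nat \<Rightarrow> (int \<times> int) monoid" where
  "PG n m \<equiv> integer_mod_group n \<times>\<times> integer_mod_group m"

lemma PG_comm: "comm_monoid (PG n m)"
proof (rule comm_monoid.intro)
  show "monoid (PG n m)"
    by (intro DirProd_monoid group.is_monoid group_integer_mod_group)
  show "comm_monoid_axioms (PG n m)"
    by (auto simp: comm_monoid_axioms_def mult_DirProd' add.commute)
qed

lemma PG_group: "group (PG n m)"
  by (intro DirProd_group group_integer_mod_group)

lemma finprod_PG:
  assumes "finite S" "f \<in> S \<rightarrow> carrier (PG n m)"
  shows "finprod (PG n m) f S = ((\<Sum>x\<in>S. fst (f x)) mod int n, (\<Sum>x\<in>S. snd (f x)) mod int m)"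
  using assms
proof (induction S rule: finite_induct)
  case empty
  then show ?case by (simp add: comm_monoid.finprod_empty[OF PG_comm])
next
  case (insert a F)
  have fa: "f a \<in> carrier (PG n m)" using insert by auto
  have fF: "f \<in> F \<rightarrow> carrier (PG n m)" using insert by auto
  have "finprod (PG n m) f (insert a F) = f a \<otimes>\<^bsub>PG n m\<^esub> finprod (PG n m) f F"
    using comm_monoid.finprod_insert[OF PG_comm insert(1,2) fF fa] by simp
  also have "\<dots> = ((\<Sum>x\<in>insert a F. fst (f x)) mod int n, (\<Sum>x\<in>insert a F. snd (f x)) mod int m)"
    using insert by (simp add: mult_DirProd' mod_add_right_eq)
  finally show ?case .
qed

lemma finprod_hom:
  assumes "comm_monoid P" "comm_monoid G" "group P" "group G" "\<phi> \<in> hom P G"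
    "finite S" "f \<in> S \<rightarrow> carrier P"
  shows "finprod G (\<phi> \<circ> f) S = \<phi> (finprod P f S)"
  using assms(6,7)
proof (induction S rule: finite_induct)
  case empty
  then show ?case using assms
    by (simp add: comm_monoid.finprod_empty hom_one)
next
  case (insert a F)
  have fa: "f a \<in> carrier P" using insert by auto
  have fF: "f \<in> F \<rightarrow> carrier P" using insert by auto
  have pF: "(\<phi> \<circ> f) \<in> F \<rightarrow> carrier G" using fF assms(5) by (auto simp: hom_def)
  have pa: "(\<phi> \<circ> f) a \<in> carrier G" using fa assms(5) by (auto simp: hom_def)
  have "finprod G (\<phi> \<circ> f) (insert a F) = (\<phi> \<circ> f) a \<otimes>\<^bsub>G\<^esub> finprod G (\<phi> \<circ> f) F"
    using comm_monoid.finprod_insert[OF assms(2) insert(1,2) pF pa] by (simp add: comp_def)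
  also have "\<dots> = \<phi> (f a) \<otimes>\<^bsub>G\<^esub> \<phi> (finprod P f F)" using insert fF by (simp add: comp_def)
  also have "\<dots> = \<phi> (f a \<otimes>\<^bsub>P\<^esub> finprod P f F)"
    using hom_mult[OF assms(5) fa comm_monoid.finprod_closed[OF assms(1) fF]] by simp
  also have "\<dots> = \<phi> (finprod P f (insert a F))"
    using comm_monoid.finprod_insert[OF assms(1) insert(1,2) fF fa] by simp
  finally show ?case .
qed

definition epsL :: "int list" where "epsL = [0, 0, 1, -1, 1, -1, 0, 0, 1, -1, 0, 0, -1, 1, 1, -1, -1, 1, -1, 1, 0, 0, -1, 1, 0, 0, 1, -1, 1, -1, 0, 0, 1, -1, 0, 0, -1, 1, 1, -1, -1, 1, -1, 1, 0, 0, -1, 1]"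
definition betL :: "int list" where "betL = [0, 3, 1, 1, 0, 3, 1, 3, 0, 0, 0, 2, 2, 3, 2, 3, 0, 1, 3, 1, 2, 2, 1, 2, 3, 1, 2, 1, 0, 0, 0, 1, 3, 2, 0, 3, 3, 2, 3, 0, 2, 1, 2, 0, 1, 2, 1, 3]"
definition yL :: "int list" where "yL = [0, 1, 1, 0, 2, 0, 2, 2, 0, 3, 1, 1, 2, 1, 3, 1, 0, 0, 2, 3, 0, 3, 3, 1, 3, 1, 2, 1, 1, 2, 3, 3, 2, 1, 2, 0, 3, 0, 3, 1, 3, 2, 0, 3, 0, 2, 2, 0]"

lemma sum8: "(\<Sum>j<8::nat. f j) = f 0 + f 1 + f 2 + f 3 + f 4 + f 5 + f 6 + (f 7 :: int)"
  by (simp add: eval_nat_numeral)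

lemma sum3: "(\<Sum>j<3::nat. f j) = f 0 + f 1 + (f 2 :: int)"
  by (simp add: eval_nat_numeral)

lemma lt2: "(k::nat) < 2 \<Longrightarrow> k = 0 \<or> k = 1" by auto
lemma lt3: "(k::nat) < 3 \<Longrightarrow> k = 0 \<or> k = 1 \<or> k = 2" by auto
lemma lt8: "(k::nat) < 8 \<Longrightarrow> k = 0 \<or> k = 1 \<or> k = 2 \<or> k = 3 \<or> k = 4 \<or> k = 5 \<or> k = 6 \<or> k = 7" by auto

lemma tab_rows:
  assumes "k < 2" "i < 3"
  shows "(\<Sum>j<8. epsL!(24*k+8*i+j)) = 0 \<and> (\<Sum>j<8. betL!(24*k+8*i+j)) mod 4 = 0
       \<and> (\<Sum>j<8. yL!(24*k+8*i+j)) mod 4 = 0"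
  using lt2[OF assms(1)] lt3[OF assms(2)]
  by (auto simp: sum8 epsL_def betL_def yL_def)

lemma tab_cols:
  assumes "k < 2" "j < 8"
  shows "(\<Sum>i<3. epsL!(24*k+8*i+j)) = 0 \<and> (\<Sum>i<3. betL!(24*k+8*i+j)) mod 4 = 0
       \<and> (\<Sum>i<3. yL!(24*k+8*i+j)) mod 4 = 0"
  using lt2[OF assms(1)] lt8[OF assms(2)]
  by (auto simp: sum3 epsL_def betL_def yL_def)

lemma tab_distinct: "distinct (zip epsL (zip betL yL))"
  by (simp add: epsL_def betL_def yL_def)

lemma tab_len: "length epsL = 48" "length betL = 48" "length yL = 48"
  by (simp_all add: epsL_def betL_def yL_def)

lemma tab_set: "set epsL \<subseteq> {-1,0,1}" "set betL \<subseteq> {0..3}" "set yL \<subseteq> {0..3}"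
  by (auto simp: epsL_def betL_def yL_def)

definition ent :: "nat \<Rightarrow> nat \<Rightarrow> nat \<Rightarrow> nat \<Rightarrow> int \<times> int" where
  "ent r k i j = (if i < 3 then
      (epsL ! (24*k+8*i+j) + int r * betL ! (24*k+8*i+j), yL ! (24*k+8*i+j))
    else (let p = int ((i-3) div 2) + 2; s = (if even (i-3) then 1 else -1::int) in
      (s * (if j<4 then 1 else -1) * p + s * (2*int k + (if j<4 then 0 else 1)) * int r,
       s * int (j mod 4))))"

definition Aent :: "nat \<Rightarrow> nat \<Rightarrow> nat \<Rightarrow> nat \<Rightarrow> int \<times> int" where
  "Aent r k i j = (fst (ent r k i j) mod (4 * int r), snd (ent r k i j) mod 4)"

lemma row_lo:
  assumes "k < 2" "i < 3"
  shows "(\<Sum>j<8. fst (ent r k i j)) mod (4 * int r) = 0 \<and> (\<Sum>j<8. snd (ent r k i j)) mod 4 = 0"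
proof -
  let ?c = "\<lambda>j. 24*k+8*i+j"
  have t: "(\<Sum>j<8. epsL!(?c j)) = 0" "(\<Sum>j<8. betL!(?c j)) mod 4 = 0" "(\<Sum>j<8. yL!(?c j)) mod 4 = 0"
    using tab_rows[OF assms] by auto
  have "(\<Sum>j<8. fst (ent r k i j)) = (\<Sum>j<8. epsL!(?c j)) + int r * (\<Sum>j<8. betL!(?c j))"
    using assms by (simp add: ent_def sum.distrib sum_distrib_left)
  also have "\<dots> = int r * (\<Sum>j<8. betL!(?c j))" using t by simp
  finally have 1: "(\<Sum>j<8. fst (ent r k i j)) = int r * (\<Sum>j<8. betL!(?c j))" .
  obtain q where "(\<Sum>j<8. betL!(?c j)) = 4 * q" using t(2) by (metis dvd_def mod_eq_0_iff_dvd)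
  then have "(\<Sum>j<8. fst (ent r k i j)) = (4 * int r) * q" using 1 by simp
  moreover have "(\<Sum>j<8. snd (ent r k i j)) = (\<Sum>j<8. yL!(?c j))"
    using assms by (simp add: ent_def)
  ultimately show ?thesis using t(3) by simp
qed

lemma row_hi:
  assumes "3 \<le> i"
  shows "(\<Sum>j<8. fst (ent r k i j)) mod (4 * int r) = 0 \<and> (\<Sum>j<8. snd (ent r k i j)) mod 4 = 0"
proof -
  define p where "p = int ((i-3) div 2) + 2"
  define s where "s = (if even (i-3) then 1 else -1::int)"
  have e: "ent r k i j = (s * (if j<4 then 1 else -1) * p + s * (2*int k + (if j<4 then 0 else 1)) * int r,
       s * int (j mod 4))" for j
    using assms by (simp add: ent_def Let_def p_def s_def)
  have "(\<Sum>j<8. fst (ent r k i j)) = (4 * int r) * (s * (4 * int k + 1))"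
    by (simp add: e sum8 algebra_simps)
  moreover have "(\<Sum>j<8. snd (ent r k i j)) = 4 * (3 * s)"
    by (simp add: e sum8 algebra_simps)
  ultimately show ?thesis by simp
qed

lemma pair_cancel:
  "fst (ent r k (3 + 2*t) j) + fst (ent r k (4 + 2*t) j) = 0 \<and>
   snd (ent r k (3 + 2*t) j) + snd (ent r k (4 + 2*t) j) = 0"
proof -
  have a: "(3 + 2*t - 3) div 2 = t" "(4 + 2*t - 3) div 2 = t" by auto
  show ?thesis by (simp add: ent_def Let_def a algebra_simps)
qed

lemma sum_pairs:
  fixes f :: "nat \<Rightarrow> int"
  assumes "\<And>t. f (3 + 2*t) + f (4 + 2*t) = 0"
  shows "(\<Sum>i<3 + 2*m. f i) = (\<Sum>i<3. f i)"
proof (induction m)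
  case 0
  then show ?case by simp
next
  case (Suc m)
  have eq: "3 + 2*Suc m = Suc (Suc (3 + 2*m))" by simp
  have "(\<Sum>i<3 + 2*Suc m. f i) = (\<Sum>i<3 + 2*m. f i) + (f (3 + 2*m) + f (4 + 2*m))"
    unfolding eq sum.lessThan_Suc by simp
  then show ?case using Suc assms by simp
qed

lemma col_sum:
  assumes "k < 2" "j < 8" "r \<ge> 3" "odd r"
  shows "(\<Sum>i<r. fst (ent r k i j)) mod (4 * int r) = 0 \<and> (\<Sum>i<r. snd (ent r k i j)) mod 4 = 0"
proof -
  obtain m where r: "r = 3 + 2*m" using assms(3,4)
    by (metis add_diff_inverse_nat odd_add odd_numeral le_less_trans lessI not_less dvd_diff_nat evenE)
  have S: "(\<Sum>i<r. fst (ent r k i j)) = (\<Sum>i<3. fst (ent r k i j))"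
      "(\<Sum>i<r. snd (ent r k i j)) = (\<Sum>i<3. snd (ent r k i j))"
    using sum_pairs[of "\<lambda>i. fst (ent r k i j)" m, OF conjunct1[OF pair_cancel]]
      sum_pairs[of "\<lambda>i. snd (ent r k i j)" m, OF conjunct2[OF pair_cancel]] r by auto
  let ?c = "\<lambda>i. 24*k+8*i+j"
  have t: "(\<Sum>i<3. epsL!(?c i)) = 0" "(\<Sum>i<3. betL!(?c i)) mod 4 = 0" "(\<Sum>i<3. yL!(?c i)) mod 4 = 0"
    using tab_cols[OF assms(1,2)] by auto
  have "(\<Sum>i<3. fst (ent r k i j)) = (\<Sum>i<3. epsL!(?c i)) + int r * (\<Sum>i<3. betL!(?c i))"
    by (simp add: ent_def sum.distrib sum_distrib_left)
  also have "\<dots> = int r * (\<Sum>i<3. betL!(?c i))" using t by simp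
  finally have 1: "(\<Sum>i<3. fst (ent r k i j)) = int r * (\<Sum>i<3. betL!(?c i))" .
  obtain q where "(\<Sum>i<3. betL!(?c i)) = 4 * q" using t(2) by (metis dvd_def mod_eq_0_iff_dvd)
  then have "(\<Sum>i<r. fst (ent r k i j)) = (4 * int r) * q" using 1 S by simp
  moreover have "(\<Sum>i<3. snd (ent r k i j)) = (\<Sum>i<3. yL!(?c i))"
    by (simp add: ent_def)
  ultimately show ?thesis using t(3) S by simp
qed

lemma lt4: "(k::nat) < 4 \<Longrightarrow> k = 0 \<or> k = 1 \<or> k = 2 \<or> k = 3" by auto

lemma fin_core1:
  fixes s s' :: int
  assumes "k<2" "k'<2" "s \<in> {1,-1}" "s' \<in> {1,-1}"
   "s * (if b then 1 else -1) = s' * (if b' then 1 else -1)"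
   "(4::int) dvd (s*(2*int k + (if b then 0 else 1)) - s'*(2*int k' + (if b' then 0 else 1)))"
  shows "s = s' \<and> k = k' \<and> b = b'"
  using lt2[OF assms(1)] lt2[OF assms(2)] assms(3-6)
  by (cases b; cases b'; auto)

lemma fin_core2:
  fixes s :: int
  assumes "m<4" "m'<4" "s \<in> {1,-1}"
   "(4::int) dvd (s * int m - s * int m')"
  shows "m = m'"
  using lt4[OF assms(1)] lt4[OF assms(2)] assms(3-4)
  by auto

lemma j_eq: "j < 8 \<Longrightarrow> j' < 8 \<Longrightarrow> (j<4) = (j'<4) \<Longrightarrow> j mod 4 = j' mod 4 \<Longrightarrow> j = (j'::nat)"
  by (cases "j<4"; cases "j'<4"; auto simp: le_mod_geq)

lemma fin_hi:
  fixes s s' :: int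
  assumes "k<2" "k'<2" "j<8" "j'<8" "s \<in> {1,-1}" "s' \<in> {1,-1}"
   "s * (if j<4 then 1 else -1) = s' * (if j'<4 then 1 else -1)"
   "(4::int) dvd (s*(2*int k + (if j<4 then 0 else 1)) - s'*(2*int k' + (if j'<4 then 0 else 1)))"
   "(4::int) dvd (s * int (j mod 4) - s' * int (j' mod 4))"
  shows "s = s' \<and> k = k' \<and> j = j'"
proof -
  have 1: "s = s' \<and> k = k' \<and> (j<4) = (j'<4)"
    using fin_core1[OF assms(1,2,5,6,7,8)] .
  then have "j mod 4 = j' mod 4" using fin_core2[of "j mod 4" "j' mod 4" s] assms(5,9) by auto
  then show ?thesis using 1 j_eq assms(3,4) by blast
qed
definition pp :: "nat \<Rightarrow> int" where "pp i = int ((i-3) div 2) + 2"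
definition sg :: "nat \<Rightarrow> int" where "sg i = (if even (i-3) then 1 else -1)"
definition uj :: "nat \<Rightarrow> int" where "uj j = (if j<4 then 1 else -1)"
definition bb :: "nat \<Rightarrow> nat \<Rightarrow> int" where "bb k j = 2*int k + (if j<4 then 0 else 1)"

lemma ent_hi_form: "3 \<le> i \<Longrightarrow>
  ent r k i j = (sg i * uj j * pp i + sg i * bb k j * int r, sg i * int (j mod 4))"
  by (simp add: ent_def Let_def pp_def sg_def uj_def bb_def)

lemma ent_lo_form: "i < 3 \<Longrightarrow>
  ent r k i j = (epsL ! (24*k+8*i+j) + int r * betL ! (24*k+8*i+j), yL ! (24*k+8*i+j))"
  by (simp add: ent_def)

lemma pp_bounds: "3 \<le> i \<Longrightarrow> i < r \<Longrightarrow> odd r \<Longrightarrow> 2 \<le> pp i \<and> 2 * pp i \<le> int r - 1"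
proof -
  assume a: "3 \<le> i" "i < r" "odd r"
  obtain m where m: "r = 2*m+1" using a(3) oddE by blast
  have "2 * ((i-3) div 2) \<le> i - 3" by simp
  then have "2 * ((i-3) div 2) \<le> 2 * m - 3" using a m by linarith
  then have "(i-3) div 2 + 2 \<le> m" using a m by linarith
  then have "int ((i-3) div 2) + 2 \<le> int m" by linarith
  then show ?thesis unfolding pp_def using m a by simp
qed
lemma idx: "k<2 \<Longrightarrow> i < 3 \<Longrightarrow> j < 8 \<Longrightarrow> k'<2 \<Longrightarrow> i' < 3 \<Longrightarrow> j' < 8 \<Longrightarrow> 24*k+8*i+j = 24*k'+8*i'+(j'::nat) \<Longrightarrow> (k,i,j) = (k',i',j')"
  by (drule lt2, drule lt3, drule lt2, drule lt3) auto
lemma i_eq: "sg i = sg i' \<Longrightarrow> pp i = pp i' \<Longrightarrow> 3 \<le> i \<Longrightarrow> 3 \<le> i' \<Longrightarrow> i = i'"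
proof -
  assume a: "sg i = sg i'" "pp i = pp i'" "3 \<le> i" "3 \<le> i'"
  have q: "(i-3) div 2 = (i'-3) div 2" using a(2) unfolding pp_def by simp
  have e: "(i-3) mod 2 = (i'-3) mod 2" using a(1) unfolding sg_def
    by (auto split: if_splits simp: even_iff_mod_2_eq_zero odd_iff_mod_2_eq_one)
  have "i - 3 = i' - 3" using div_mult_mod_eq[of "i-3" 2] div_mult_mod_eq[of "i'-3" 2] q e by metis
  then show ?thesis using a by simp
qed

lemma sg_pm: "sg i \<in> {1,-1}" and uj_pm: "uj j \<in> {1,-1}"
  by (auto simp: sg_def uj_def)

lemma sd: "int r dvd d \<Longrightarrow> \<bar>d\<bar> < int r \<Longrightarrow> d = 0"
  using dvd_imp_le_int[of d "int r"] by fastforce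

lemma sd4: "(4::int) dvd d \<Longrightarrow> \<bar>d\<bar> < 4 \<Longrightarrow> d = 0"
  using dvd_imp_le_int[of d 4] by fastforce

lemma tab_nth:
  assumes "c < 48"
  shows "epsL!c \<in> {-1,0,1}" "0 \<le> betL!c \<and> betL!c \<le> 3" "0 \<le> yL!c \<and> yL!c \<le> 3"
proof -
  have "epsL!c \<in> set epsL" "betL!c \<in> set betL" "yL!c \<in> set yL" using assms tab_len by simp_all
  then show "epsL!c \<in> {-1,0,1}" "0 \<le> betL!c \<and> betL!c \<le> 3" "0 \<le> yL!c \<and> yL!c \<le> 3"
    using tab_set by auto
qed

lemma tab_inj:
  assumes "c < 48" "c' < 48" "epsL!c = epsL!c'" "betL!c = betL!c'" "yL!c = yL!c'"
  shows "c = c'"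
proof -
  have "zip epsL (zip betL yL) ! c = zip epsL (zip betL yL) ! c'"
    using assms tab_len by simp
  then show ?thesis using tab_distinct nth_eq_iff_index_eq[of "zip epsL (zip betL yL)" c c'] assms tab_len
    by simp
qed

lemma lo_hi_absurd:
  assumes "int r dvd e - w * p" "e \<in> {-1,0,1}" "w \<in> {1,-1}" "2 \<le> p" "2 * p \<le> int r - 1"
  shows False
proof -
  have "\<bar>e - w * p\<bar> < int r" "e - w * p \<noteq> 0" using assms(2-5) by auto
  then show False using sd[OF assms(1)] by simp
qed

lemma ent_inj:
  assumes r: "3 \<le> r" "odd r" and a: "k<2" "i<r" "j<8" "k'<2" "i'<r" "j'<8"
    and eq: "Aent r k i j = Aent r k' i' j'"
  shows "(k, i, j) = (k', i', j')"
proof -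
  define XA where "XA = fst (ent r k i j)"
  define XB where "XB = fst (ent r k' i' j')"
  define YA where "YA = snd (ent r k i j)"
  define YB where "YB = snd (ent r k' i' j')"
  have dX4: "(4 * int r) dvd XA - XB" using eq unfolding Aent_def XA_def XB_def
    by (simp add: mod_eq_dvd_iff)
  then have dX: "int r dvd XA - XB" using dvd_mult_right by blast
  have dY: "4 dvd YA - YB" using eq unfolding Aent_def YA_def YB_def
    by (simp add: mod_eq_dvd_iff)
  have r0: "int r \<noteq> 0" using r by simp
  consider (ll) "i<3" "i'<3" | (lh) "i<3" "3\<le>i'" | (hl) "3\<le>i" "i'<3" | (hh) "3\<le>i" "3\<le>i'"
    by linarith
  then show ?thesis
  proof cases
    case ll
    define c where "c = 24*k+8*i+j"
    define c' where "c' = 24*k'+8*i'+j'"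
    have cb: "c < 48" "c' < 48" using a ll unfolding c_def c'_def by auto
    have XX: "XA = epsL!c + int r * betL!c" "XB = epsL!c' + int r * betL!c'"
      "YA = yL!c" "YB = yL!c'"
      using ll by (simp_all add: XA_def XB_def YA_def YB_def ent_lo_form c_def c'_def)
    have "epsL!c - epsL!c' = (XA - XB) - int r * (betL!c - betL!c')"
      by (simp add: XX algebra_simps)
    then have "int r dvd epsL!c - epsL!c'" using dX by simp
    moreover have "\<bar>epsL!c - epsL!c'\<bar> < int r" using tab_nth(1)[OF cb(1)] tab_nth(1)[OF cb(2)] r by auto
    ultimately have "epsL!c - epsL!c' = 0" by (rule sd)
    then have e: "epsL!c = epsL!c'" by simp
    have "XA - XB = int r * (betL!c - betL!c')" by (simp add: XX e algebra_simps)
    then have "int r * 4 dvd int r * (betL!c - betL!c')" using dX4 by (simp add: mult.commute)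
    then have "4 dvd (betL!c - betL!c')" using r0 by simp
    moreover have "\<bar>betL!c - betL!c'\<bar> < 4" using tab_nth(2)[OF cb(1)] tab_nth(2)[OF cb(2)] by linarith
    ultimately have "betL!c - betL!c' = 0" by (rule sd4)
    then have b: "betL!c = betL!c'" by simp
    have "4 dvd (yL!c - yL!c')" using dY XX by simp
    moreover have "\<bar>yL!c - yL!c'\<bar> < 4" using tab_nth(3)[OF cb(1)] tab_nth(3)[OF cb(2)] by linarith
    ultimately have "yL!c - yL!c' = 0" by (rule sd4)
    then have y: "yL!c = yL!c'" by simp
    have "c = c'" using tab_inj[OF cb e b y] .
    then show ?thesis using idx a ll unfolding c_def c'_def by blast
  next
    case lh
    define c where "c = 24*k+8*i+j"
    have cb: "c < 48" using a lh unfolding c_def by auto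
    have XX: "XA = epsL!c + int r * betL!c" "XB = sg i' * uj j' * pp i' + sg i' * bb k' j' * int r"
      using lh by (simp_all add: XA_def XB_def ent_lo_form ent_hi_form c_def)
    have "epsL!c - (sg i' * uj j') * pp i' = (XA - XB) - int r * (betL!c - sg i' * bb k' j')"
      by (simp add: XX algebra_simps)
    then have "int r dvd epsL!c - (sg i' * uj j') * pp i'" using dX by simp
    moreover have "sg i' * uj j' \<in> {1,-1}" using sg_pm[of i'] uj_pm[of j'] by auto
    ultimately show ?thesis using lo_hi_absurd tab_nth(1)[OF cb] pp_bounds[OF lh(2) a(5) r(2)] by blast
  next
    case hl
    define c where "c = 24*k'+8*i'+j'"
    have cb: "c < 48" using a hl unfolding c_def by auto
    have XX: "XB = epsL!c + int r * betL!c" "XA = sg i * uj j * pp i + sg i * bb k j * int r"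
      using hl by (simp_all add: XA_def XB_def ent_lo_form ent_hi_form c_def)
    have "epsL!c - (sg i * uj j) * pp i = (XB - XA) - int r * (betL!c - sg i * bb k j)"
      by (simp add: XX algebra_simps)
    moreover have "int r dvd XB - XA" using dX by (metis dvd_minus_iff minus_diff_eq)
    ultimately have "int r dvd epsL!c - (sg i * uj j) * pp i" by simp
    moreover have "sg i * uj j \<in> {1,-1}" using sg_pm[of i] uj_pm[of j] by auto
    ultimately show ?thesis using lo_hi_absurd tab_nth(1)[OF cb] pp_bounds[OF hl(1) a(2) r(2)] by blast
  next
    case hh
    have XX: "XA = sg i * uj j * pp i + sg i * bb k j * int r"
      "XB = sg i' * uj j' * pp i' + sg i' * bb k' j' * int r"
      "YA = sg i * int (j mod 4)" "YB = sg i' * int (j' mod 4)"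
      using hh by (simp_all add: XA_def XB_def YA_def YB_def ent_hi_form)
    define w where "w = sg i * uj j"
    define w' where "w' = sg i' * uj j'"
    have w: "w \<in> {1,-1}" "w' \<in> {1,-1}"
      using sg_pm[of i] uj_pm[of j] sg_pm[of i'] uj_pm[of j'] unfolding w_def w'_def by auto
    have pb: "2 \<le> pp i \<and> 2 * pp i \<le> int r - 1" "2 \<le> pp i' \<and> 2 * pp i' \<le> int r - 1"
      using pp_bounds hh a r by auto
    have "w * pp i - w' * pp i' = (XA - XB) - int r * (sg i * bb k j - sg i' * bb k' j')"
      by (simp add: XX w_def w'_def algebra_simps)
    then have "int r dvd w * pp i - w' * pp i'" using dX by simp
    moreover have "\<bar>w * pp i - w' * pp i'\<bar> < int r" using w pb by auto
    ultimately have "w * pp i - w' * pp i' = 0" using sd by blast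
    then have ww: "w = w'" and pe: "pp i = pp i'" using w pb by auto
    have "XA - XB = int r * (sg i * bb k j - sg i' * bb k' j')"
      using XX ww pe unfolding w_def w'_def by (simp add: algebra_simps)
    then have "int r * 4 dvd int r * (sg i * bb k j - sg i' * bb k' j')" using dX4 by (simp add: mult.commute)
    then have d1: "4 dvd (sg i * bb k j - sg i' * bb k' j')" using r0 by simp
    have d2: "4 dvd (sg i * int (j mod 4) - sg i' * int (j' mod 4))" using dY XX by simp
    have w2: "sg i * (if j<4 then 1 else -1) = sg i' * (if j'<4 then 1 else -1)"
      using ww unfolding w_def w'_def uj_def .
    have "sg i = sg i' \<and> k = k' \<and> j = j'"
      using fin_hi[OF a(1) a(4) a(3) a(6) sg_pm sg_pm w2] d1 d2 unfolding bb_def by blast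
    moreover have "i = i'" using calculation pe hh i_eq by blast
    ultimately show ?thesis by simp
  qed
qed

lemma Aent_carrier: "0 < r \<Longrightarrow> Aent r k i j \<in> carrier (PG (4*r) 4)"
  by (simp add: Aent_def carrier_integer_mod_group)

lemma carrier_PG: "0 < r \<Longrightarrow> carrier (PG (4*r) 4) = {0..<4 * int r} \<times> {0..<4}"
  by (simp add: carrier_integer_mod_group)

lemma concrete:
  assumes r: "3 \<le> r" "odd r"
  shows "is_MRS (PG (4*r) 4) r 8 2 (Aent r) (0,0) (0,0)"
proof -
  have r0: "0 < r" using r by simp
  let ?D = "{..<(2::nat)} \<times> {..<r} \<times> {..<(8::nat)}"
  let ?f = "\<lambda>(k, i, j). Aent r k i j"
  have fin: "finite (carrier (PG (4*r) 4))" unfolding carrier_PG[OF r0] by simp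
  have cardC: "card (carrier (PG (4*r) 4)) = r * 8 * 2"
    unfolding carrier_PG[OF r0] by (simp add: card_cartesian_product nat_mult_distrib)
  have inj: "inj_on ?f ?D"
    unfolding inj_on_def using ent_inj[OF r] by auto
  have sub: "?f ` ?D \<subseteq> carrier (PG (4*r) 4)" using Aent_carrier[OF r0] by (auto simp del: carrier_DirProd)
  have "card (?f ` ?D) = card ?D" using card_image[OF inj] .
  also have "\<dots> = r * 8 * 2" by (simp add: card_cartesian_product)
  finally have "?f ` ?D = carrier (PG (4*r) 4)"
    using card_subset_eq[OF fin sub] cardC by simp
  then have bij: "bij_betw ?f ?D (carrier (PG (4*r) 4))"
    using inj by (simp add: bij_betw_def)
  have rows: "finprod (PG (4*r) 4) (\<lambda>j. Aent r k i j) {..<8} = (0,0)" if "k<2" "i<r" for k i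
  proof -
    have "finprod (PG (4*r) 4) (\<lambda>j. Aent r k i j) {..<8} =
      ((\<Sum>j<8. fst (ent r k i j) mod (4 * int r)) mod (4 * int r), (\<Sum>j<8. snd (ent r k i j) mod 4) mod 4)"
      using finprod_PG[of "{..<8}" "\<lambda>j. Aent r k i j" "4*r" 4] Aent_carrier[OF r0]
      by (simp add: Aent_def)
    also have "\<dots> = ((\<Sum>j<8. fst (ent r k i j)) mod (4 * int r), (\<Sum>j<8. snd (ent r k i j)) mod 4)"
      by (simp add: mod_sum_eq)
    also have "\<dots> = (0,0)"
    proof (cases "i < 3")
      case True
      then show ?thesis using row_lo[OF that(1) True] by simp
    next
      case False
      then show ?thesis using row_hi[of i r k] by simp
    qed
    finally show ?thesis .
  qed
  have cols: "finprod (PG (4*r) 4) (\<lambda>i. Aent r k i j) {..<r} = (0,0)" if "k<2" "j<8" for k j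
  proof -
    have "finprod (PG (4*r) 4) (\<lambda>i. Aent r k i j) {..<r} =
      ((\<Sum>i<r. fst (ent r k i j) mod (4 * int r)) mod (4 * int r), (\<Sum>i<r. snd (ent r k i j) mod 4) mod 4)"
      using finprod_PG[of "{..<r}" "\<lambda>i. Aent r k i j" "4*r" 4] Aent_carrier[OF r0]
      by (simp add: Aent_def)
    also have "\<dots> = ((\<Sum>i<r. fst (ent r k i j)) mod (4 * int r), (\<Sum>i<r. snd (ent r k i j)) mod 4)"
      by (simp add: mod_sum_eq)
    also have "\<dots> = (0,0)" using col_sum[OF that r] by simp
    finally show ?thesis .
  qed
  show ?thesis unfolding is_MRS_def
    using fin cardC bij rows cols r0 unfolding carrier_PG[OF r0] by simp
qed

theorem lemma4p7:
  fixes G :: "('g, 'm) monoid_scheme" and r :: nat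
  assumes "r \<ge> 3" and "odd r"
    and "comm_group G"
    and "G \<cong> integer_mod_group (4 * r) \<times>\<times> integer_mod_group 4"
  shows "\<exists>A. is_MRS G r 8 2 A \<one>\<^bsub>G\<^esub> \<one>\<^bsub>G\<^esub>"
proof -
  let ?P = "PG (4*r) 4"
  have gG: "group G" and cG: "comm_monoid G" using assms(3) unfolding comm_group_def by auto
  obtain h where h: "h \<in> iso G ?P" using assms(4) unfolding is_iso_def by blast
  define \<phi> where "\<phi> = inv_into (carrier G) h"
  have phi: "\<phi> \<in> iso ?P G" unfolding \<phi>_def using group.iso_set_sym[OF gG h] .
  have phom: "\<phi> \<in> hom ?P G" and pbij: "bij_betw \<phi> (carrier ?P) (carrier G)"
    using phi by (auto simp: iso_def)
  have M: "is_MRS ?P r 8 2 (Aent r) (0,0) (0,0)" using concrete assms(1,2) by blast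
  define A where "A = (\<lambda>k i j. \<phi> (Aent r k i j))"
  have r0: "0 < r" using assms(1) by simp
  have one: "\<phi> (0,0) = \<one>\<^bsub>G\<^esub>"
    using hom_one[OF phom PG_group gG] by simp
  have "is_MRS G r 8 2 A \<one>\<^bsub>G\<^esub> \<one>\<^bsub>G\<^esub>"
    unfolding is_MRS_def
  proof (intro conjI allI impI)
    show "finite (carrier G)" using M pbij bij_betw_finite unfolding is_MRS_def by blast
    show "card (carrier G) = r * 8 * 2" using M bij_betw_same_card[OF pbij] unfolding is_MRS_def by simp
    have "bij_betw (\<phi> \<circ> (\<lambda>(k, i, j). Aent r k i j)) ({..<2} \<times> {..<r} \<times> {..<8}) (carrier G)"
      using bij_betw_trans[OF _ pbij] M unfolding is_MRS_def by blast
    moreover have "(\<phi> \<circ> (\<lambda>(k, i, j). Aent r k i j)) = (\<lambda>(k, i, j). A k i j)"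
      by (auto simp: A_def fun_eq_iff)
    ultimately show "bij_betw (\<lambda>(k, i, j). A k i j) ({..<2} \<times> {..<r} \<times> {..<8}) (carrier G)" by simp
    show "\<one>\<^bsub>G\<^esub> \<in> carrier G" "\<one>\<^bsub>G\<^esub> \<in> carrier G" using gG by (simp_all add: group.is_monoid monoid.one_closed)
  next
    fix k i assume ki: "k < (2::nat)" "i < r"
    have "finprod G (\<lambda>j. A k i j) {..<8} = finprod G (\<phi> \<circ> (\<lambda>j. Aent r k i j)) {..<8}"
      by (simp add: A_def comp_def)
    also have "\<dots> = \<phi> (finprod ?P (\<lambda>j. Aent r k i j) {..<8})"
      by (rule finprod_hom[OF PG_comm cG PG_group gG phom]) (use Aent_carrier[OF r0] in auto)
    also have "\<dots> = \<one>\<^bsub>G\<^esub>" using M ki one unfolding is_MRS_def by simp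
    finally show "finprod G (\<lambda>j. A k i j) {..<8} = \<one>\<^bsub>G\<^esub>" .
  next
    fix k j assume kj: "k < (2::nat)" "j < (8::nat)"
    have "finprod G (\<lambda>i. A k i j) {..<r} = finprod G (\<phi> \<circ> (\<lambda>i. Aent r k i j)) {..<r}"
      by (simp add: A_def comp_def)
    also have "\<dots> = \<phi> (finprod ?P (\<lambda>i. Aent r k i j) {..<r})"
      by (rule finprod_hom[OF PG_comm cG PG_group gG phom]) (use Aent_carrier[OF r0] in auto)
    also have "\<dots> = \<one>\<^bsub>G\<^esub>" using M kj one unfolding is_MRS_def by simp
    finally show "finprod G (\<lambda>i. A k i j) {..<r} = \<one>\<^bsub>G\<^esub>" .
  qed
  then show ?thesis by blast
qed

end
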